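(* Let $n\geq 8$, let $\mathfrak{X}=\{A_0,A_1,A_2\}$ be a non-symmetric class $2$ association scheme of order $n-1$, let $B_1$ be the $(2n-1)\times(2n-1)$ matrix defined from $A_1$ as in the context, and let $\mathfrak{Y}=\{I_{2n-1},B_1,B_1^T\}$. Then each of the sets $\{1,\dots,n-1\}$, $\{n\}$, $\{n+1,\dots,2n-1\}$ is mapped to itself by every element of $\operatorname{Aut}(\mathfrak{Y})$.
   Context: An association scheme of order $N$ is a set $\{A_0,\dots,A_d\}$ of $N\times N$ $0/1$-matrices such that $A_0=I_N$, $\sum_i A_i=J_N$ (all-ones matrix), each $A_i^T$ is in the set, and each product $A_iA_j$ is a linear combination of the $A_k$. It is non-symmetric of class $2$ if $d=2$ and $A_1^T=A_2\neq A_1$. The automorphism group of $\{A_0,\dots,A_d\}$ is $\{\sigma\in S_N : P_\sigma^TA_iP_\sigma=A_i \text{ for all } i\}$, where $P_\sigma$ is the permutation matrix of $\sigma$. Definition of $B_1$ (indices $1\le i,j\le n-1$): $(B_1)_{i,j}=(A_1)_{ij}$, $(B_1)_{i,n}=0$, $(B_1)_{i,n+j}=(A_0+A_1)_{ij}$; $(B_1)_{n,j}=1$, $(B_1)_{n,n}=0$, $(B_1)_{n,n+j}=0$; $(B_1)_{n+i,j}=(A_1)_{ij}$, $(B_1)_{n+i,n}=1$, $(B_1)_{n+i,n+j}=(A_2)_{ij}$. In block form, $B_1=\begin{bmatrix} A_1 & \mathbf{0} & A_0+A_1\\ \mathbf{1}^T & 0 & \mathbf{0}^T\\ A_1 & \mathbf{1}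 & A_2\end{bmatrix}$ with blocks indexed by $\{1,\dots,n-1\},\{n\},\{n+1,\dots,2n-1\}$. It is a fact that $\mathfrak{Y}$ is a non-symmetric class $2$ association scheme. *)

theory Defs
  imports Complex_Main "HOL-Combinatorics.Permutations"
begin

text \<open>Matrices of order N are modelled as functions nat => nat => real,
  with rows and columns indexed by {1..N}; entries outside are irrelevant.\<close>

type_synonym mat = "nat \<Rightarrow> nat \<Rightarrow> real"

definition mat_eq :: "nat \<Rightarrow> mat \<Rightarrow> mat \<Rightarrow> bool" where
  "mat_eq N M M' \<longleftrightarrow> (\<forall>x\<in>{1..N}. \<forall>y\<in>{1..N}. M x y = M' x y)"

definition mat_transpose :: "mat \<Rightarrow> mat" where
  "mat_transpose M = (\<lambda>x y. M y x)"

definition mat_mult :: "nat \<Rightarrow> mat \<Rightarrow> mat \<Rightarrow> mat" where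
  "mat_mult N M M' = (\<lambda>x y. \<Sum>z\<in>{1..N}. M x z * M' z y)"

definition id_mat :: mat where
  "id_mat = (\<lambda>x y. if x = y then 1 else 0)"

definition association_scheme :: "nat \<Rightarrow> nat \<Rightarrow> (nat \<Rightarrow> mat) \<Rightarrow> bool" where
  "association_scheme N d A \<longleftrightarrow>
     (\<forall>i\<le>d. \<forall>x\<in>{1..N}. \<forall>y\<in>{1..N}. A i x y = 0 \<or> A i x y = 1) \<and>
     mat_eq N (A 0) id_mat \<and>
     (\<forall>x\<in>{1..N}. \<forall>y\<in>{1..N}. (\<Sum>i\<le>d. A i x y) = 1) \<and>
     (\<forall>i\<le>d. \<exists>j\<le>d. mat_eq N (mat_transpose (A i)) (A j)) \<and>
     (\<forall>i\<le>d. \<forall>j\<le>d. \<exists>c :: nat \<Rightarrow> real.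
        mat_eq N (mat_mult N (A i) (A j)) (\<lambda>x y. \<Sum>k\<le>d. c k * A k x y))"

definition nonsym_class2_scheme :: "nat \<Rightarrow> (nat \<Rightarrow> mat) \<Rightarrow> bool" where
  "nonsym_class2_scheme N A \<longleftrightarrow> association_scheme N 2 A \<and>
     mat_eq N (mat_transpose (A 1)) (A 2) \<and> \<not> mat_eq N (A 2) (A 1)"

definition scheme_aut :: "nat \<Rightarrow> nat \<Rightarrow> (nat \<Rightarrow> mat) \<Rightarrow> (nat \<Rightarrow> nat) set" where
  "scheme_aut N d A = {\<sigma>. \<sigma> permutes {1..N} \<and>
     (\<forall>i\<le>d. \<forall>x\<in>{1..N}. \<forall>y\<in>{1..N}. A i (\<sigma> x) (\<sigma> y) = A i x y)}"

definition B1 :: "nat \<Rightarrow> (nat \<Rightarrow> mat) \<Rightarrow> mat" where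
  "B1 n A = (\<lambda>x y.
     if x \<le> n - 1 then
       (if y \<le> n - 1 then A 1 x y else if y = n then 0 else A 0 x (y - n) + A 1 x (y - n))
     else if x = n then
       (if y \<le> n - 1 then 1 else 0)
     else
       (if y \<le> n - 1 then A 1 (x - n) y else if y = n then 1 else A 2 (x - n) (y - n)))"

definition Yscheme :: "nat \<Rightarrow> (nat \<Rightarrow> mat) \<Rightarrow> (nat \<Rightarrow> mat)" where
  "Yscheme n A = (\<lambda>i. if i = 0 then id_mat else if i = 1 then B1 n A else mat_transpose (B1 n A))"

end

theory Submission
  imports Defs
begin

locale tsetup =
  fixes n :: nat and T :: mat and k l :: real and E :: "nat \<Rightarrow> nat \<Rightarrow> bool"
  assumes n1: "n \<ge> 1"
  and zo: "\<And>x y. x \<in> {1..n-1} \<Longrightarrow> y \<in> {1..n-1} \<Longrightarrow> T x y = 0 \<or> T x y = 1"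
  and irr: "\<And>x. x \<in> {1..n-1} \<Longrightarrow> T x x = 0"
  and tourn: "\<And>x y. x \<in> {1..n-1} \<Longrightarrow> y \<in> {1..n-1} \<Longrightarrow> x \<noteq> y \<Longrightarrow> T x y + T y x = 1"
  and reg: "\<And>x. x \<in> {1..n-1} \<Longrightarrow> (\<Sum>z\<in>{1..n-1}. T x z) = k"
  and lam: "\<And>x y. x \<in> {1..n-1} \<Longrightarrow> y \<in> {1..n-1} \<Longrightarrow> T x y = 1 \<Longrightarrow>
              (\<Sum>z\<in>{1..n-1}. T x z * T y z) = l"
  and arc: "\<And>i. i \<in> {1..n-1} \<Longrightarrow> \<exists>j1\<in>{1..n-1}. \<exists>j2\<in>{1..n-1}. T i j1 = 1 \<and> T i j2 = 1 \<and> T j1 j2 = 1"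
  and E1: "\<And>x y. x \<in> {1..n-1} \<Longrightarrow> y \<in> {1..n-1} \<Longrightarrow> E x y \<longleftrightarrow> T x y = 1"
  and E2: "\<And>x. x \<in> {1..n-1} \<Longrightarrow> \<not> E x n"
  and E3: "\<And>x y. x \<in> {1..n-1} \<Longrightarrow> y \<in> {1..n-1} \<Longrightarrow> E x (n+y) \<longleftrightarrow> (x = y \<or> T x y = 1)"
  and E4: "\<And>y. y \<in> {1..n-1} \<Longrightarrow> E n y"
  and E5: "\<not> E n n"
  and E6: "\<And>y. y \<in> {1..n-1} \<Longrightarrow> \<not> E n (n+y)"
  and E7: "\<And>x y. x \<in> {1..n-1} \<Longrightarrow> y \<in> {1..n-1} \<Longrightarrow> E (n+x) y \<longleftrightarrow> T x y = 1"
  and E8: "\<And>x. x \<in> {1..n-1} \<Longrightarrow> E (n+x) n"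
  and E9: "\<And>x y. x \<in> {1..n-1} \<Longrightarrow> y \<in> {1..n-1} \<Longrightarrow> E (n+x) (n+y) \<longleftrightarrow> T y x = 1"
begin

definition Q :: "nat \<Rightarrow> bool" where
  "Q v \<longleftrightarrow> (\<forall>u\<in>{1..2*n-1}. E v u \<longrightarrow> (\<exists>w\<in>{1..2*n-1}. E w v \<and>
      (\<forall>y\<in>{1..2*n-1}. E v y \<longrightarrow> (E u y \<longleftrightarrow> E w y))))"

lemma vcases:
  assumes "v \<in> {1..2*n-1}"
  obtains "v \<in> {1..n-1}" | "v = n" | x where "x \<in> {1..n-1}" "v = n + x"
proof -
  consider "v \<le> n - 1" | "v = n" | "v > n" using n1 by linarith
  then show ?thesis
  proof cases
    case 1 then show ?thesis using assms that(1) by auto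
  next
    case 2 then show ?thesis using that(2) by auto
  next
    case 3
    have "v - n \<in> {1..n-1}" "v = n + (v - n)" using 3 assms by auto
    then show ?thesis using that(3) by blast
  qed
qed

lemma inV1: "x \<in> {1..n-1} \<Longrightarrow> x \<in> {1..2*n-1}" by auto
lemma inV2: "n \<in> {1..2*n-1}" using n1 by auto
lemma inV3: "x \<in> {1..n-1} \<Longrightarrow> n + x \<in> {1..2*n-1}" by auto

lemma T01: "x \<in> {1..n-1} \<Longrightarrow> y \<in> {1..n-1} \<Longrightarrow> T x y \<noteq> 1 \<Longrightarrow> T x y = 0"
  using zo by blast

lemma antisym1: "x \<in> {1..n-1} \<Longrightarrow> y \<in> {1..n-1} \<Longrightarrow> T x y = 1 \<Longrightarrow> T y x = 0"
  using tourn irr by (cases "x = y") force+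

lemma other: "x \<in> {1..n-1} \<Longrightarrow> y \<in> {1..n-1} \<Longrightarrow> x \<noteq> y \<Longrightarrow> T x y \<noteq> 1 \<Longrightarrow> T y x = 1"
  using tourn T01 by force

lemma Qn: "Q n"
  unfolding Q_def
proof (intro ballI impI)
  fix u assume u: "u \<in> {1..2*n-1}" "E n u"
  have uM: "u \<in> {1..n-1}"
    using u by (cases rule: vcases[OF u(1)]) (use E5 E6 in auto)
  show "\<exists>w\<in>{1..2*n-1}. E w n \<and> (\<forall>y\<in>{1..2*n-1}. E n y \<longrightarrow> (E u y \<longleftrightarrow> E w y))"
  proof (intro bexI[of _ "n+u"] conjI ballI impI)
    show "E (n+u) n" using E8 uM by blast
    fix y assume y: "y \<in> {1..2*n-1}" "E n y"
    have yM: "y \<in> {1..n-1}"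
      using y by (cases rule: vcases[OF y(1)]) (use E5 E6 in auto)
    show "E u y \<longleftrightarrow> E (n+u) y" using E1 E7 uM yM by auto
  qed (use inV3 uM in auto)
qed

lemma count_contra:
  assumes M: "i \<in> {1..n-1}" "j1 \<in> {1..n-1}" "j2 \<in> {1..n-1}" "t \<in> {1..n-1}"
    and a: "T i j1 = 1" "T i j2 = 1" "T j1 j2 = 1" "T t i = 1" "T j1 t = 1"
    and sub: "\<forall>z\<in>{1..n-1}. z \<noteq> i \<longrightarrow> T t z = 1 \<longrightarrow> T j1 z = 1"
  shows False
proof -
  let ?M = "{1..n-1}"
  have pw: "T j1 z * T t z = T t z - (if z = i then 1 else 0)" if z: "z \<in> ?M" for z
  proof (cases "z = i")
    case True
    then show ?thesis using antisym1[OF M(1) M(2) a(1)] a(4) by simp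
  next
    case False
    then show ?thesis using sub z T01[OF M(4) z] by (cases "T t z = 1") auto
  qed
  have "(\<Sum>z\<in>?M. T j1 z * T t z) = (\<Sum>z\<in>?M. T t z - (if z = i then 1 else 0))"
    using pw by (rule sum.cong[OF refl])
  also have "\<dots> = (\<Sum>z\<in>?M. T t z) - 1"
    using M(1) by (simp add: sum_subtractf)
  finally have s1: "(\<Sum>z\<in>?M. T j1 z * T t z) = k - 1" using reg[OF M(4)] by simp
  have l1: "l = k - 1" using lam[OF M(2) M(4) a(5)] s1 by simp
  have s2: "(\<Sum>z\<in>?M. T i z * T j2 z) = k - 1" using lam[OF M(1) M(3) a(2)] l1 by simp
  have s3: "(\<Sum>z\<in>?M. T i z * (1 - T j2 z)) = 1"
  proof -
    have "(\<Sum>z\<in>?M. T i z * (1 - T j2 z)) = (\<Sum>z\<in>?M. T i z) - (\<Sum>z\<in>?M. T i z * T j2 z)"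
      by (simp add: right_diff_distrib sum_subtractf)
    then show ?thesis using s2 reg[OF M(1)] by simp
  qed
  have ne: "j1 \<noteq> j2" using a(3) irr M(2) by auto
  have nn: "0 \<le> T i z * (1 - T j2 z)" if "z \<in> ?M" for z
    using zo[OF M(1) that] zo[OF M(3) that] by auto
  have "(\<Sum>z\<in>{j1,j2}. T i z * (1 - T j2 z)) \<le> (\<Sum>z\<in>?M. T i z * (1 - T j2 z))"
    by (rule sum_mono2) (use M nn in auto)
  moreover have "(\<Sum>z\<in>{j1,j2}. T i z * (1 - T j2 z)) = 2"
    using ne a antisym1[OF M(2) M(3) a(3)] irr[OF M(3)] by simp
  ultimately show False using s3 by simp
qed

lemma notQ1:
  assumes i: "i \<in> {1..n-1}" shows "\<not> Q i"
proof
  assume q: "Q i"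
  obtain j1 j2 where j: "j1 \<in> {1..n-1}" "j2 \<in> {1..n-1}" "T i j1 = 1" "T i j2 = 1" "T j1 j2 = 1"
    using arc[OF i] by blast
  have "E i j1" using E1 i j by blast
  then obtain w where w: "w \<in> {1..2*n-1}" "E w i"
    and H: "\<forall>y\<in>{1..2*n-1}. E i y \<longrightarrow> (E j1 y \<longleftrightarrow> E w y)"
    using q inV1[OF j(1)] unfolding Q_def by blast
  show False
  proof (cases rule: vcases[OF w(1)])
    case 1
    have "T w i = 1" using w E1 1 i by blast
    moreover have "E i (n+i)" using E3 i by blast
    moreover have "\<not> E j1 (n+i)" using E3[OF j(1) i] antisym1[OF i j(1) j(3)] j irr i by auto
    moreover have "E w (n+i)" using E3[OF 1 i] calculation by blast
    ultimately show False using H inV3[OF i] by blast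
  next
    case 2
    have "E i (n+j1)" using E3 i j by blast
    moreover have "E j1 (n+j1)" using E3 j by blast
    ultimately show False using H inV3[OF j(1)] E6[OF j(1)] 2 by blast
  next
    case (3 t)
    have ti: "T t i = 1" using w E7 3 i by blast
    have "E i (n+j2)" "E j1 (n+j2)" using E3 i j by blast+
    then have "E (n+t) (n+j2)" using H inV3[OF j(2)] 3 by blast
    then have a1: "T j2 t = 1" using E9 3 j by blast
    have "E i j2" "E j1 j2" using E1 i j by blast+
    then have "E (n+t) j2" using H inV1[OF j(2)] 3 by blast
    then have "T t j2 = 1" using E7 3 j by blast
    then show False using antisym1[OF j(2) 3(1) a1] by simp
  qed
qed

lemma notQ3:
  assumes i: "i \<in> {1..n-1}" shows "\<not> Q (n+i)"
proof
  assume q: "Q (n+i)"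
  obtain j1 j2 where j: "j1 \<in> {1..n-1}" "j2 \<in> {1..n-1}" "T i j1 = 1" "T i j2 = 1" "T j1 j2 = 1"
    using arc[OF i] by blast
  have "E (n+i) j1" using E7 i j by blast
  then obtain w where w: "w \<in> {1..2*n-1}" "E w (n+i)"
    and H: "\<forall>y\<in>{1..2*n-1}. E (n+i) y \<longrightarrow> (E j1 y \<longleftrightarrow> E w y)"
    using q inV1[OF j(1)] unfolding Q_def by blast
  show False
  proof (cases rule: vcases[OF w(1)])
    case 1
    have "w = i \<or> T w i = 1" using E3 1 i w by blast
    then show False
    proof
      assume wi: "w = i"
      have "E (n+i) j1" "E i j1" using E7 E1 i j by blast+
      moreover have "\<not> E j1 j1" using E1 j irr by auto
      ultimately show False using H inV1[OF j(1)] wi by blast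
    next
      assume ti: "T w i = 1"
      have j1t: "T j1 w = 1"
      proof -
        have "E (n+i) (n+w)" using E9 i 1 ti by blast
        moreover have "E w (n+w)" using E3 1 by blast
        ultimately have "E j1 (n+w)" using H inV3[OF 1] by blast
        then have "j1 = w \<or> T j1 w = 1" using E3 j 1 by blast
        moreover have "j1 \<noteq> w" using antisym1[OF i j(1) j(3)] ti by auto
        ultimately show ?thesis by blast
      qed
      have sub: "\<forall>z\<in>{1..n-1}. z \<noteq> i \<longrightarrow> T w z = 1 \<longrightarrow> T j1 z = 1"
      proof (intro ballI impI)
        fix z assume z: "z \<in> {1..n-1}" "z \<noteq> i" "T w z = 1"
        show "T j1 z = 1"
        proof (cases "T i z = 1")
          case True
          have "E (n+i) z" "E w z" using E7 E1 i z 1 True by blast+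
          then have "E j1 z" using H inV1[OF z(1)] by blast
          then show ?thesis using E1 j z by blast
        next
          case False
          have zi: "T z i = 1" using other[OF i z(1)] z False by auto
          have "E (n+i) (n+z)" using E9 i z zi by blast
          moreover have "E w (n+z)" using E3 1 z by blast
          ultimately have "E j1 (n+z)" using H inV3[OF z(1)] by blast
          then have "j1 = z \<or> T j1 z = 1" using E3 j z by blast
          then show ?thesis using False j by auto
        qed
      qed
      show False using count_contra[OF i j(1) j(2) 1 j(3) j(4) j(5) ti j1t sub] .
    qed
  next
    case 2
    then show False using w E6 i by blast
  next
    case (3 s)
    have "E (n+i) n" "E (n+s) n" using E8 i 3 by blast+
    moreover have "\<not> E j1 n" using E2 j by blast
    ultimately show False using H inV2 3 by blast
  qed
qed

lemma Q_iff_n: assumes "v \<in> {1..2*n-1}" shows "Q v \<longleftrightarrow> v = n"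
  by (cases rule: vcases[OF assms]) (use Qn notQ1 notQ3 in auto)

lemma Q_inv:
  assumes p: "\<sigma> permutes {1..2*n-1}"
    and h: "\<forall>x\<in>{1..2*n-1}. \<forall>y\<in>{1..2*n-1}. E (\<sigma> x) (\<sigma> y) = E x y"
    and v: "v \<in> {1..2*n-1}" and q: "Q v"
  shows "Q (\<sigma> v)"
  unfolding Q_def
proof (intro ballI impI)
  let ?V = "{1..2*n-1}"
  have img: "\<sigma> ` ?V = ?V" using p by (rule permutes_image)
  fix u' assume u': "u' \<in> ?V" "E (\<sigma> v) u'"
  obtain u where u: "u \<in> ?V" "u' = \<sigma> u" using u'(1) img by blast
  have "E v u" using h u u' v by metis
  then obtain w where w: "w \<in> ?V" "E w v" and H: "\<forall>y\<in>?V. E v y \<longrightarrow> (E u y \<longleftrightarrow> E w y)"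
    using q u unfolding Q_def by blast
  show "\<exists>w\<in>?V. E w (\<sigma> v) \<and> (\<forall>y\<in>?V. E (\<sigma> v) y \<longrightarrow> (E u' y \<longleftrightarrow> E w y))"
  proof (intro bexI[of _ "\<sigma> w"] conjI ballI impI)
    show "E (\<sigma> w) (\<sigma> v)" using h w v by metis
    show "\<sigma> w \<in> ?V" using w img by blast
    fix y' assume y': "y' \<in> ?V" "E (\<sigma> v) y'"
    obtain y where y: "y \<in> ?V" "y' = \<sigma> y" using y'(1) img by blast
    have "E v y" using h y y' v by metis
    then have "E u y \<longleftrightarrow> E w y" using H y by blast
    then show "E u' y' \<longleftrightarrow> E (\<sigma> w) y'" using h y u w by metis
  qed
qed

lemma main:
  assumes p: "\<sigma> permutes {1..2*n-1}"
    and h: "\<forall>x\<in>{1..2*n-1}. \<forall>y\<in>{1..2*n-1}. E (\<sigma> x) (\<sigma> y) = E x y"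
  shows "\<sigma> ` {1..n - 1} = {1..n - 1} \<and> \<sigma> ` {n} = {n} \<and> \<sigma> ` {n + 1..2 * n - 1} = {n + 1..2 * n - 1}"
proof -
  let ?V = "{1..2*n-1}"
  have img: "\<sigma> ` ?V = ?V" using p by (rule permutes_image)
  have sn: "\<sigma> n = n"
    using Q_inv[OF p h inV2 Qn] Q_iff_n img inV2 by blast
  have X: "x \<in> {1..n-1} \<longleftrightarrow> E n x" if "x \<in> ?V" for x
    using that by (cases rule: vcases) (use E4 E5 E6 in auto)
  have Z: "x \<in> {n+1..2*n-1} \<longleftrightarrow> E x n" if "x \<in> ?V" for x
    using that by (cases rule: vcases) (use E2 E5 E8 in auto)
  have sV: "\<sigma> x \<in> ?V" if "x \<in> ?V" for x using img that by blast
  have preX: "\<sigma> x \<in> {1..n-1} \<longleftrightarrow> x \<in> {1..n-1}" if "x \<in> ?V" for x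
    using X[OF sV[OF that]] X[OF that] h that inV2 sn by metis
  have preZ: "\<sigma> x \<in> {n+1..2*n-1} \<longleftrightarrow> x \<in> {n+1..2*n-1}" if "x \<in> ?V" for x
    using Z[OF sV[OF that]] Z[OF that] h that inV2 sn by metis
  have XV: "{1..n-1} \<subseteq> ?V" "{n+1..2*n-1} \<subseteq> ?V" by auto
  have "\<sigma> ` {1..n-1} = {1..n-1}"
  proof
    show "\<sigma> ` {1..n-1} \<subseteq> {1..n-1}" using preX XV by blast
    show "{1..n-1} \<subseteq> \<sigma> ` {1..n-1}"
    proof
      fix y assume y: "y \<in> {1..n-1}"
      then obtain x where "x \<in> ?V" "y = \<sigma> x" using img XV by blast
      then show "y \<in> \<sigma> ` {1..n-1}" using preX y by blast
    qed
  qed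
  moreover have "\<sigma> ` {n+1..2*n-1} = {n+1..2*n-1}"
  proof
    show "\<sigma> ` {n+1..2*n-1} \<subseteq> {n+1..2*n-1}" using preZ XV by blast
    show "{n+1..2*n-1} \<subseteq> \<sigma> ` {n+1..2*n-1}"
    proof
      fix y assume y: "y \<in> {n+1..2*n-1}"
      then obtain x where "x \<in> ?V" "y = \<sigma> x" using img XV by blast
      then show "y \<in> \<sigma> ` {n+1..2*n-1}" using preZ y by blast
    qed
  qed
  ultimately show ?thesis using sn by simp
qed

end

theorem lemma2:
  fixes n :: nat and A :: "nat \<Rightarrow> mat"
  assumes "n \<ge> 8"
    and "nonsym_class2_scheme (n - 1) A"
  shows "\<forall>\<sigma>\<in>scheme_aut (2 * n - 1) 2 (Yscheme n A).
           \<sigma> ` {1..n - 1} = {1..n - 1} \<and> \<sigma> ` {n} = {n} \<and> \<sigma> ` {n + 1..2 * n - 1} = {n + 1..2 * n - 1}"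
proof
  fix \<sigma> assume s: "\<sigma> \<in> scheme_aut (2 * n - 1) 2 (Yscheme n A)"
  let ?M = "{1..n-1}"
  let ?T = "A 1"
  have as: "association_scheme (n-1) 2 A" and tr: "mat_eq (n-1) (mat_transpose (A 1)) (A 2)"
    using assms(2) unfolding nonsym_class2_scheme_def by auto
  have zo: "A 1 x y = 0 \<or> A 1 x y = 1" if "x \<in> ?M" "y \<in> ?M" for x y
    using as that unfolding association_scheme_def by auto
  have A0e: "A 0 x y = (if x = y then 1 else 0)" if "x \<in> ?M" "y \<in> ?M" for x y
    using as that unfolding association_scheme_def mat_eq_def id_mat_def by auto
  have A2e: "A 2 x y = A 1 y x" if "x \<in> ?M" "y \<in> ?M" for x y
    using tr that unfolding mat_eq_def mat_transpose_def by auto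
  have d2: "{..2::nat} = {0,1,2}" by auto
  have sum3: "A 0 x y + A 1 x y + A 2 x y = 1" if "x \<in> ?M" "y \<in> ?M" for x y
  proof -
    have "(\<Sum>i\<le>2. A i x y) = 1" using as that unfolding association_scheme_def by auto
    then show ?thesis unfolding d2 by (simp add: add.assoc)
  qed
  have irr: "A 1 x x = 0" if "x \<in> ?M" for x
    using sum3[OF that that] A0e[OF that that] A2e[OF that that] zo[OF that that] by auto
  have tourn: "A 1 x y + A 1 y x = 1" if "x \<in> ?M" "y \<in> ?M" "x \<noteq> y" for x y
    using sum3[OF that(1,2)] A0e[OF that(1,2)] A2e[OF that(1,2)] that(3) by auto
  obtain c where c: "mat_eq (n-1) (mat_mult (n-1) (A 1) (A 2)) (\<lambda>x y. \<Sum>k\<le>2. c k * A k x y)"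
  proof -
    have "\<forall>i\<le>2. \<forall>j\<le>2. \<exists>c :: nat \<Rightarrow> real.
        mat_eq (n-1) (mat_mult (n-1) (A i) (A j)) (\<lambda>x y. \<Sum>k\<le>2. c k * A k x y)"
      using as unfolding association_scheme_def by blast
    then have "\<exists>c :: nat \<Rightarrow> real. mat_eq (n-1) (mat_mult (n-1) (A 1) (A 2)) (\<lambda>x y. \<Sum>k\<le>2. c k * A k x y)"
      by simp
    then show ?thesis using that by blast
  qed
  have lamg: "(\<Sum>z\<in>?M. A 1 x z * A 1 y z) = c 0 * A 0 x y + c 1 * A 1 x y + c 2 * A 1 y x"
    if "x \<in> ?M" "y \<in> ?M" for x y
  proof -
    have "(\<Sum>z\<in>?M. A 1 x z * A 1 y z) = (\<Sum>z\<in>?M. A 1 x z * A 2 z y)"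
      by (rule sum.cong) (use A2e that in auto)
    also have "\<dots> = (\<Sum>k\<le>2. c k * A k x y)"
      using c that unfolding mat_eq_def mat_mult_def by auto
    finally show ?thesis unfolding d2 using A2e[OF that] by (simp add: add.assoc)
  qed
  have reg: "(\<Sum>z\<in>?M. A 1 x z) = c 0" if "x \<in> ?M" for x
  proof -
    have "(\<Sum>z\<in>?M. A 1 x z) = (\<Sum>z\<in>?M. A 1 x z * A 1 x z)"
      by (rule sum.cong) (use zo that in auto)
    also have "\<dots> = c 0" using lamg[OF that that] A0e[OF that that] irr[OF that] by simp
    finally show ?thesis .
  qed
  have lam: "(\<Sum>z\<in>?M. A 1 x z * A 1 y z) = c 1" if "x \<in> ?M" "y \<in> ?M" "A 1 x y = 1" for x y
  proof -
    have "x \<noteq> y" using irr that by auto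
    then show ?thesis using lamg[OF that(1,2)] A0e[OF that(1,2)] tourn[OF that(1,2)] that(3) by simp
  qed
  have cnt: "2 * c 0 = real (n - 2)"
  proof -
    have mpos: "card ?M > 0" using assms(1) by simp
    have "(\<Sum>x\<in>?M. \<Sum>z\<in>?M. A 1 x z + A 1 z x) = (\<Sum>x\<in>?M. \<Sum>z\<in>?M. 1 - (if x = z then 1 else 0))"
      by (rule sum.cong[OF refl], rule sum.cong[OF refl]) (use tourn irr in auto)
    also have "\<dots> = (\<Sum>x\<in>?M. real (card ?M) - 1)"
      by (rule sum.cong[OF refl]) (simp add: sum_subtractf)
    finally have e1: "(\<Sum>x\<in>?M. \<Sum>z\<in>?M. A 1 x z + A 1 z x) = real (card ?M) * (real (card ?M) - 1)"
      by simp
    have "(\<Sum>x\<in>?M. \<Sum>z\<in>?M. A 1 x z + A 1 z x) = (\<Sum>x\<in>?M. \<Sum>z\<in>?M. A 1 x z) + (\<Sum>x\<in>?M. \<Sum>z\<in>?M. A 1 z x)"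
      by (simp add: sum.distrib)
    also have "(\<Sum>x\<in>?M. \<Sum>z\<in>?M. A 1 z x) = (\<Sum>x\<in>?M. \<Sum>z\<in>?M. A 1 x z)"
      by (rule sum.swap)
    also have "(\<Sum>x\<in>?M. \<Sum>z\<in>?M. A 1 x z) = real (card ?M) * c 0"
      using reg by simp
    finally have "2 * (real (card ?M) * c 0) = real (card ?M) * (real (card ?M) - 1)"
      using e1 by simp
    then have "real (card ?M) * (2 * c 0) = real (card ?M) * (real (card ?M) - 1)"
      by (simp add: algebra_simps)
    then have "2 * c 0 = real (card ?M) - 1" using mpos by simp
    moreover have "card ?M = n - 1" by simp
    moreover have "real (n - 1) - 1 = real (n - 2)" using assms(1) by (simp add: of_nat_diff)
    ultimately show ?thesis by simp
  qed
  have arc: "\<exists>j1\<in>?M. \<exists>j2\<in>?M. A 1 i j1 = 1 \<and> A 1 i j2 = 1 \<and> A 1 j1 j2 = 1" if i: "i \<in> ?M" for i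
  proof -
    let ?S = "{z\<in>?M. A 1 i z = 1}"
    have "(\<Sum>z\<in>?M. A 1 i z) = (\<Sum>z\<in>?S. A 1 i z)"
      by (rule sum.mono_neutral_right) (use zo i in fastforce)+
    also have "\<dots> = real (card ?S)" by simp
    finally have "real (card ?S) = c 0" using reg[OF i] by simp
    then have "card ?S \<ge> 2" using cnt assms(1) by simp
    then have "\<not> card ?S \<le> Suc 0" by simp
    then obtain a b where ab: "a \<in> ?S" "b \<in> ?S" "a \<noteq> b"
      using card_le_Suc0_iff_eq[of ?S] by auto
    show ?thesis
    proof (cases "A 1 a b = 1")
      case True then show ?thesis using ab by blast
    next
      case False
      then have "A 1 b a = 1" using tourn[of a b] zo[of a b] ab by auto
      then show ?thesis using ab by blast
    qed
  qed
  let ?E = "\<lambda>x y. B1 n A x y = 1"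
  have n1: "n - 1 + 1 = n" using assms(1) by simp
  have nb: "\<And>x. x \<in> ?M \<Longrightarrow> \<not> (n + x \<le> n - 1) \<and> n + x \<noteq> n \<and> n + x - n = x \<and> x \<le> n - 1 \<and> x \<noteq> n"
    by auto
  have nn: "\<not> n \<le> n - 1" using assms(1) by simp
  interpret t: tsetup n "A 1" "c 0" "c 1" ?E
  proof
    show "1 \<le> n" using assms(1) by simp
    show "\<And>x y. x \<in> ?M \<Longrightarrow> y \<in> ?M \<Longrightarrow> A 1 x y = 0 \<or> A 1 x y = 1" by (rule zo)
    show "\<And>x. x \<in> ?M \<Longrightarrow> A 1 x x = 0" by (rule irr)
    show "\<And>x y. x \<in> ?M \<Longrightarrow> y \<in> ?M \<Longrightarrow> x \<noteq> y \<Longrightarrow> A 1 x y + A 1 y x = 1" by (rule tourn)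
    show "\<And>x. x \<in> ?M \<Longrightarrow> (\<Sum>z\<in>?M. A 1 x z) = c 0" by (rule reg)
    show "\<And>x y. x \<in> ?M \<Longrightarrow> y \<in> ?M \<Longrightarrow> A 1 x y = 1 \<Longrightarrow> (\<Sum>z\<in>?M. A 1 x z * A 1 y z) = c 1" by (rule lam)
    show "\<And>i. i \<in> ?M \<Longrightarrow> \<exists>j1\<in>?M. \<exists>j2\<in>?M. A 1 i j1 = 1 \<and> A 1 i j2 = 1 \<and> A 1 j1 j2 = 1" by (rule arc)
    show "?E x y \<longleftrightarrow> A 1 x y = 1" if x: "x \<in> ?M" and y: "y \<in> ?M" for x y
      using nb[OF x] nb[OF y] by (simp add: B1_def)
    show "\<not> ?E x n" if x: "x \<in> ?M" for x
      using nb[OF x] nn by (simp add: B1_def)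
    show "?E x (n+y) \<longleftrightarrow> (x = y \<or> A 1 x y = 1)" if x: "x \<in> ?M" and y: "y \<in> ?M" for x y
      using nb[OF x] nb[OF y] A0e[OF x y] irr[OF x] by (cases "x = y") (simp_all add: B1_def)
    show "?E n y" if y: "y \<in> ?M" for y using nb[OF y] nn by (simp add: B1_def)
    show "\<not> ?E n n" using nn by (simp add: B1_def)
    show "\<not> ?E n (n+y)" if y: "y \<in> ?M" for y using nb[OF y] nn by (simp add: B1_def)
    show "?E (n+x) y \<longleftrightarrow> A 1 x y = 1" if x: "x \<in> ?M" and y: "y \<in> ?M" for x y
      using nb[OF x] nb[OF y] by (simp add: B1_def)
    show "?E (n+x) n" if x: "x \<in> ?M" for x using nb[OF x] nn by (simp add: B1_def)
    show "?E (n+x) (n+y) \<longleftrightarrow> A 1 y x = 1" if x: "x \<in> ?M" and y: "y \<in> ?M" for x y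
      using nb[OF x] nb[OF y] A2e[OF x y] by (simp add: B1_def)
  qed
  have p: "\<sigma> permutes {1..2*n-1}" and h0: "\<forall>x\<in>{1..2*n-1}. \<forall>y\<in>{1..2*n-1}. B1 n A (\<sigma> x) (\<sigma> y) = B1 n A x y"
    using s unfolding scheme_aut_def Yscheme_def by (auto dest: spec[of _ 1])
  have h: "\<forall>x\<in>{1..2*n-1}. \<forall>y\<in>{1..2*n-1}. ?E (\<sigma> x) (\<sigma> y) = ?E x y" using h0 by simp
  show "\<sigma> ` {1..n - 1} = {1..n - 1} \<and> \<sigma> ` {n} = {n} \<and> \<sigma> ` {n + 1..2 * n - 1} = {n + 1..2 * n - 1}"
    using t.main[OF p h] .
qed

end
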